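(* Let $M$ be a right $R$-module, $D$ a direct summand of $M$ and $X$ a cyclic submodule of $M$ such that $X\,\beta^*\,D$ in $M$. Then $D$ is cyclic.
   Context: $R$ is an associative ring with identity; modules are unital right $R$-modules. $K\ll N$ means $K$ is small in $N$ ($K+L=N$ implies $L=N$). For submodules $X,Y$ of $M$, $X\,\beta^*\,Y$ means $(X+Y)/X\ll M/X$ and $(X+Y)/Y\ll M/Y$. *)

theory Defs
  imports Main
begin

text \<open>A unital right R-module is modelled as a type 'm (the module M = UNIV)
  with abelian group structure and a right scalar action act x r (= x r).\<close>

definition right_module :: "('m::ab_group_add \<Rightarrow> 'r::ring_1 \<Rightarrow> 'm) \<Rightarrow> bool" where
  "right_module act \<longleftrightarrow>
     (\<forall>x y r. act (x + y) r = act x r + act y r) \<and>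
     (\<forall>x r s. act x (r + s) = act x r + act x s) \<and>
     (\<forall>x r s. act x (r * s) = act (act x r) s) \<and>
     (\<forall>x. act x 1 = x)"

definition submodule :: "('m::ab_group_add \<Rightarrow> 'r::ring_1 \<Rightarrow> 'm) \<Rightarrow> 'm set \<Rightarrow> bool" where
  "submodule act N \<longleftrightarrow> 0 \<in> N \<and> (\<forall>x\<in>N. \<forall>y\<in>N. x + y \<in> N) \<and> (\<forall>x\<in>N. - x \<in> N)
     \<and> (\<forall>x\<in>N. \<forall>r. act x r \<in> N)"

definition msum :: "'m::ab_group_add set \<Rightarrow> 'm set \<Rightarrow> 'm set" where
  "msum A B = {a + b | a b. a \<in> A \<and> b \<in> B}"

definition cyclic_submodule :: "('m::ab_group_add \<Rightarrow> 'r::ring_1 \<Rightarrow> 'm) \<Rightarrow> 'm set \<Rightarrow> bool" where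
  "cyclic_submodule act N \<longleftrightarrow> (\<exists>x. N = {act x r | r. True})"

definition direct_summand :: "('m::ab_group_add \<Rightarrow> 'r::ring_1 \<Rightarrow> 'm) \<Rightarrow> 'm set \<Rightarrow> bool" where
  "direct_summand act D \<longleftrightarrow> submodule act D \<and>
     (\<exists>D'. submodule act D' \<and> msum D D' = UNIV \<and> D \<inter> D' = {0})"

text \<open>small_quot act X K, for submodules X \<subseteq> K of M, expresses K/X \<ll> M/X:
  via the correspondence between submodules of M/X and submodules of M containing X,
  every submodule L \<supseteq> X with K + L = M equals M.\<close>
definition small_quot :: "('m::ab_group_add \<Rightarrow> 'r::ring_1 \<Rightarrow> 'm) \<Rightarrow> 'm set \<Rightarrow> 'm set \<Rightarrow> bool" where
  "small_quot act X K \<longleftrightarrow>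
     (\<forall>L. submodule act L \<and> X \<subseteq> L \<and> msum K L = UNIV \<longrightarrow> L = UNIV)"

definition beta_star :: "('m::ab_group_add \<Rightarrow> 'r::ring_1 \<Rightarrow> 'm) \<Rightarrow> 'm set \<Rightarrow> 'm set \<Rightarrow> bool" where
  "beta_star act X Y \<longleftrightarrow> small_quot act X (msum X Y) \<and> small_quot act Y (msum X Y)"

end

theory Submission
  imports Defs
begin

lemma msum_sub:
  assumes rm: "right_module act" and A: "submodule act A" and B: "submodule act B"
  shows "submodule act (msum A B)"
proof -
  have add: "\<And>x y r. act (x + y) r = act x r + act y r" using rm unfolding right_module_def by blast
  have A0: "0 \<in> A" and Aa: "\<And>x y. x \<in> A \<Longrightarrow> y \<in> A \<Longrightarrow> x + y \<in> A"
    and An: "\<And>x. x \<in> A \<Longrightarrow> - x \<in> A" and Am: "\<And>x r. x \<in> A \<Longrightarrow> act x r \<in> A"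
    using A unfolding submodule_def by auto
  have B0: "0 \<in> B" and Ba: "\<And>x y. x \<in> B \<Longrightarrow> y \<in> B \<Longrightarrow> x + y \<in> B"
    and Bn: "\<And>x. x \<in> B \<Longrightarrow> - x \<in> B" and Bm: "\<And>x r. x \<in> B \<Longrightarrow> act x r \<in> B"
    using B unfolding submodule_def by auto
  have mem: "\<And>a b. a \<in> A \<Longrightarrow> b \<in> B \<Longrightarrow> a + b \<in> msum A B" unfolding msum_def by blast
  have el: "\<And>x. x \<in> msum A B \<Longrightarrow> \<exists>a b. x = a + b \<and> a \<in> A \<and> b \<in> B" unfolding msum_def by blast
  show ?thesis unfolding submodule_def
  proof (intro conjI ballI allI)
    show "0 \<in> msum A B" using mem[OF A0 B0] by simp
  next
    fix x y assume "x \<in> msum A B" "y \<in> msum A B"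
    then obtain a b a' b' where h: "x = a + b" "y = a' + b'" "a \<in> A" "b \<in> B" "a' \<in> A" "b' \<in> B"
      using el by meson
    have "x + y = (a + a') + (b + b')" using h by (simp add: algebra_simps)
    thus "x + y \<in> msum A B" using mem[OF Aa[OF h(3,5)] Ba[OF h(4,6)]] by simp
  next
    fix x assume "x \<in> msum A B"
    then obtain a b where h: "x = a + b" "a \<in> A" "b \<in> B" using el by meson
    have "- x = (- a) + (- b)" using h by (simp add: algebra_simps)
    thus "- x \<in> msum A B" using mem[OF An[OF h(2)] Bn[OF h(3)]] by simp
  next
    fix x r assume "x \<in> msum A B"
    then obtain a b where h: "x = a + b" "a \<in> A" "b \<in> B" using el by meson
    have "act x r = act a r + act b r" using h add by simp
    thus "act x r \<in> msum A B" using mem[OF Am[OF h(2)] Bm[OF h(3)]] by simp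
  qed
qed

theorem lemma2p4:
  fixes act :: "'m::ab_group_add \<Rightarrow> 'r::ring_1 \<Rightarrow> 'm"
    and D X :: "'m set"
  assumes "right_module act"
    and "direct_summand act D"
    and "submodule act X" and "cyclic_submodule act X"
    and "beta_star act X D"
  shows "cyclic_submodule act D"
proof -
  have add: "\<And>x y r. act (x + y) r = act x r + act y r" using assms(1) unfolding right_module_def by blast
  obtain D' where sD: "submodule act D" and sD': "submodule act D'" and DD: "msum D D' = UNIV"
    and cap: "D \<inter> D' = {0}" using assms(2) unfolding direct_summand_def by blast
  obtain x where xX: "X = {act x r | r. True}" using assms(4) unfolding cyclic_submodule_def by blast
  have sm: "small_quot act X (msum X D)" using assms(5) unfolding beta_star_def by blast
  have sL: "submodule act (msum X D')" using msum_sub assms(1,3) sD' by blast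
  have X0: "0 \<in> X" "0 \<in> D'" using assms(3) sD' unfolding submodule_def by auto
  have XL: "X \<subseteq> msum X D'" unfolding msum_def using X0 by force
  have "msum (msum X D) (msum X D') = UNIV"
  proof -
   { fix m
    from DD obtain d d' where m: "m = d + d'" "d \<in> D" "d' \<in> D'" unfolding msum_def by blast
    have 1: "0 + d \<in> msum X D" unfolding msum_def using X0 m by blast
    have 2: "0 + d' \<in> msum X D'" unfolding msum_def using X0 m by blast
    have "m = (0 + d) + (0 + d')" using m by simp
    then have "m \<in> msum (msum X D) (msum X D')" using 1 2 unfolding msum_def by blast }
    thus ?thesis by blast
  qed
  hence L: "msum X D' = UNIV" using sm sL XL unfolding small_quot_def by blast
  obtain d0 d0' where x: "x = d0 + d0'" "d0 \<in> D" "d0' \<in> D'" using DD unfolding msum_def by blast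
  have "D = {act d0 r | r. True}"
  proof
    show "{act d0 r |r. True} \<subseteq> D" using sD x(2) unfolding submodule_def by blast
  next
    show "D \<subseteq> {act d0 r |r. True}"
    proof
      fix d assume dD: "d \<in> D"
      have "d \<in> msum X D'" using L by simp
      then obtain r e where de: "d = act x r + e" "e \<in> D'" unfolding msum_def xX by blast
      have eq: "d - act d0 r = act d0' r + e" using de x add by (simp add: algebra_simps)
      have "d - act d0 r \<in> D"
      proof -
        have "- act d0 r \<in> D" using sD x(2) unfolding submodule_def by blast
        hence "d + - act d0 r \<in> D" using dD sD unfolding submodule_def by blast
        thus ?thesis by (simp only: diff_conv_add_uminus)
      qed
      moreover have "act d0' r + e \<in> D'" using sD' x(3) de(2) unfolding submodule_def by blast
      ultimately have "d - act d0 r \<in> D \<inter> D'" unfolding eq by blast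
      hence "d - act d0 r = 0" using cap by blast
      hence "d = act d0 r" by (simp only: right_minus_eq)
      thus "d \<in> {act d0 r |r. True}" by blast
    qed
  qed
  thus ?thesis unfolding cyclic_submodule_def by (rule exI)
qed

end
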